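(* Let $K$ be a field of characteristic $p>0$, and let $\sigma,\tau$ be $K$-algebra automorphisms of the ring $\mathcal{D}(P_n)$ of differential operators on $P_n=K[x_1,\ldots,x_n]$. Then $\sigma=\tau$ if and only if $\sigma(x_i)=\tau(x_i)$ for all $i=1,\ldots,n$.
   Context: For $i=1,\ldots,n$ and $k\in\mathbb{N}$, $\partial_i^{[k]}=\partial_i^k/k!$ denotes the $K$-linear map of $P_n$ given by $\partial_i^{[k]}(x^m)=\binom{m_i}{k}x^{m-ke_i}$ (zero if $m_i<k$), where $x^m=x_1^{m_1}\cdots x_n^{m_n}$ and $e_1,\ldots,e_n$ is the standard basis of $\mathbb{Z}^n$. The ring $\mathcal{D}(P_n)$ is the subalgebra of $\mathrm{End}_K(P_n)$ generated by $P_n$ (acting by multiplication) and all $\partial_i^{[k]}$; one has $\mathcal{D}(P_n)=\bigoplus_{\alpha\in\mathbb{N}^n}P_n\partial^{[\alpha]}$ with $\partial^{[\alpha]}=\prod_i\partial_i^{[\alpha_i]}$. $\mathrm{Aut}_K(\mathcal{D}(P_n))$ is the group of $K$-algebra automorphisms. *)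

theory Defs
  imports Main "HOL-Library.Poly_Mapping"
begin

text \<open>The polynomial ring P_n = K[x_i | i :: 'n] in CARD('n) variables (the variables are
  indexed by a finite type 'n, so n = CARD('n) >= 1 is arbitrary but fixed).
  A monomial x^m is an exponent vector m :: 'n =>0 nat; a polynomial is a finitely
  supported map from monomials to coefficients in K.\<close>

type_synonym ('n, 'a) mpoly = "('n \<Rightarrow>\<^sub>0 nat) \<Rightarrow>\<^sub>0 'a"

definition var :: "'n \<Rightarrow> ('n, 'a::comm_ring_1) mpoly" where
  "var i = Poly_Mapping.single (Poly_Mapping.single i 1) 1"

definition const :: "'a::comm_ring_1 \<Rightarrow> ('n, 'a) mpoly" where
  "const c = Poly_Mapping.single 0 c"

definition mulop :: "('n, 'a::comm_ring_1) mpoly \<Rightarrow> (('n, 'a) mpoly \<Rightarrow> ('n, 'a) mpoly)" where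
  "mulop f = (\<lambda>q. f * q)"

text \<open>Divided-power derivative: dpow i k (x^m) = (m_i choose k) x^(m - k e_i), extended K-linearly
  (the term is zero when m_i < k since then the binomial coefficient vanishes).\<close>
definition dpow :: "'n \<Rightarrow> nat \<Rightarrow> ('n, 'a::comm_ring_1) mpoly \<Rightarrow> ('n, 'a) mpoly" where
  "dpow i k f = (\<Sum>m\<in>Poly_Mapping.keys f.
      Poly_Mapping.single (m - Poly_Mapping.single i k)
        (of_nat (Poly_Mapping.lookup m i choose k) * Poly_Mapping.lookup f m))"

text \<open>The ring D(P_n): the subalgebra of End_K(P_n) generated by the multiplication operators
  and all dpow i k (closed under sums and composition; K-scalars are the multiplication
  operators by constants, the identity is mulop 1).\<close>
inductive_set diffops :: "(('n, 'a::comm_ring_1) mpoly \<Rightarrow> ('n, 'a) mpoly) set" where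
  mul: "mulop f \<in> diffops"
| der: "dpow i k \<in> diffops"
| add: "a \<in> diffops \<Longrightarrow> b \<in> diffops \<Longrightarrow> (\<lambda>q. a q + b q) \<in> diffops"
| comp: "a \<in> diffops \<Longrightarrow> b \<in> diffops \<Longrightarrow> a \<circ> b \<in> diffops"

text \<open>K-algebra automorphisms of D(P_n) (only their values on diffops matter).\<close>
definition is_Kalg_aut ::
  "((('n, 'a::comm_ring_1) mpoly \<Rightarrow> ('n, 'a) mpoly) \<Rightarrow> (('n, 'a) mpoly \<Rightarrow> ('n, 'a) mpoly)) \<Rightarrow> bool"
where
  "is_Kalg_aut \<sigma> \<longleftrightarrow>
     bij_betw \<sigma> diffops diffops \<and>
     (\<forall>a\<in>diffops. \<forall>b\<in>diffops. \<sigma> (\<lambda>q. a q + b q) = (\<lambda>q. \<sigma> a q + \<sigma> b q)) \<and>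
     (\<forall>a\<in>diffops. \<forall>b\<in>diffops. \<sigma> (a \<circ> b) = \<sigma> a \<circ> \<sigma> b) \<and>
     \<sigma> id = id \<and>
     (\<forall>c. \<forall>a\<in>diffops. \<sigma> (mulop (const c) \<circ> a) = mulop (const c) \<circ> \<sigma> a)"

end

theory Submission
  imports Defs "HOL-Computational_Algebra.Primes"
begin

abbreviation lk where "lk \<equiv> Poly_Mapping.lookup"
abbreviation ks where "ks \<equiv> Poly_Mapping.keys"
abbreviation sg where "sg \<equiv> Poly_Mapping.single"

lemma expand: "(f::('n,'a::comm_ring_1) mpoly) = (\<Sum>m\<in>ks f. sg m (lk f m))"
  by (rule poly_mapping_eqI) (auto simp: Poly_Mapping.lookup_sum Poly_Mapping.lookup_single when_def in_keys_iff)

lemma dpow_S: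
  assumes "finite S" "ks f \<subseteq> S"
  shows "dpow i k f = (\<Sum>m\<in>S. sg (m - sg i k) (of_nat (lk m i choose k) * lk f m))"
  unfolding dpow_def
  by (rule sum.mono_neutral_left) (use assms in \<open>auto simp: in_keys_iff\<close>)

lemma dpow_add: "dpow i k (f + g) = dpow i k f + dpow i k g"
proof -
  let ?S = "ks f \<union> ks g \<union> ks (f+g)"
  have "dpow i k (f + g) = (\<Sum>m\<in>?S. sg (m - sg i k) (of_nat (lk m i choose k) * lk (f+g) m))"
    by (rule dpow_S) auto
  also have "\<dots> = (\<Sum>m\<in>?S. sg (m - sg i k) (of_nat (lk m i choose k) * lk f m))
     + (\<Sum>m\<in>?S. sg (m - sg i k) (of_nat (lk m i choose k) * lk g m))"
    by (simp add: Poly_Mapping.lookup_add distrib_left Poly_Mapping.single_add sum.distrib)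
  also have "\<dots> = dpow i k f + dpow i k g"
    by (subst (1 2) dpow_S[symmetric]) auto
  finally show ?thesis .
qed

lemma dpow_zero[simp]: "dpow i k 0 = 0"
  by (simp add: dpow_def)

lemma const_mult_single: "const c * sg m a = sg m (c * a)"
  by (simp add: const_def Poly_Mapping.mult_single)

lemma lookup_const_mult: "lk (const c * f) m = c * lk f m"
  by (simp add: const_def flip: Poly_Mapping.mult_map_scale_conv_mult)
     (simp add: Poly_Mapping.map.rep_eq when_def)

lemma dpow_smul: "dpow i k (const c * f) = const c * dpow i k f"
proof -
  let ?S = "ks f \<union> ks (const c * f)"
  have "dpow i k (const c * f) = (\<Sum>m\<in>?S. sg (m - sg i k) (of_nat (lk m i choose k) * lk (const c * f) m))"
    by (rule dpow_S) auto
  also have "\<dots> = const c * (\<Sum>m\<in>?S. sg (m - sg i k) (of_nat (lk m i choose k) * lk f m))"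
    by (simp add: lookup_const_mult sum_distrib_left const_mult_single mult.left_commute)
  also have "\<dots> = const c * dpow i k f"
    by (subst dpow_S[symmetric]) auto
  finally show ?thesis .
qed

lemma dpow_single: "dpow i k (sg m c) = sg (m - sg i k) (of_nat (lk m i choose k) * c)"
  by (subst dpow_S[of "{m}"]) (auto simp: Poly_Mapping.lookup_single)

lemma dpow_0: "dpow i 0 f = f"
  by (simp add: dpow_def flip: expand)

lemma additive_sum:
  fixes F :: "'x::comm_monoid_add \<Rightarrow> 'y::ab_group_add"
  assumes "\<And>a b. F (a + b) = F a + F b"
  shows "F (sum h S) = (\<Sum>x\<in>S. F (h x))"
proof -
  have z: "F 0 = 0" using assms[of 0 0] by simp
  show ?thesis
    by (induction S rule: infinite_finite_induct) (auto simp: z assms)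
qed

lemma lin_ext:
  fixes F G :: "('n,'a::comm_ring_1) mpoly \<Rightarrow> ('n,'b::comm_ring_1) mpoly"
  assumes "\<And>a b. F (a + b) = F a + F b" "\<And>a b. G (a + b) = G a + G b"
    and "\<And>m c. F (sg m c) = G (sg m c)"
  shows "F q = G q"
proof -
  have "F q = F (\<Sum>m\<in>ks q. sg m (lk q m))" by (subst expand) simp
  also have "\<dots> = (\<Sum>m\<in>ks q. G (sg m (lk q m)))" by (simp add: additive_sum assms)
  also have "\<dots> = G (\<Sum>m\<in>ks q. sg m (lk q m))" by (simp add: additive_sum assms)
  finally show ?thesis by (simp flip: expand)
qed

lemma choose_id: "((n - b) choose a) * (n choose b) = ((a+b) choose a) * (n choose (a+b))"
proof (cases "a + b \<le> n")
  case True
  have "(n choose (a+b)) * ((a+b) choose b) = (n choose b) * ((n - b) choose (a + b - b))"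
    by (rule choose_mult) (use True in auto)
  then show ?thesis using binomial_symmetric[of b "a+b"]
    by (simp add: mult.commute)
next
  case False
  then show ?thesis
    by (cases "b \<le> n") (auto simp: binomial_eq_0)
qed

lemma lookup_minus_single: "lk (m - sg i k) j = (if i = j then lk m j - k else lk m j)"
  by (simp add: Poly_Mapping.lookup_minus Poly_Mapping.lookup_single when_def)

lemma lookup_plus_single: "lk (sg i k + m) j = (if i = j then k + lk m j else lk m j)"
  by (simp add: Poly_Mapping.lookup_add Poly_Mapping.lookup_single when_def)

lemma dpow_comp: "dpow i a (dpow i b f) = const (of_nat ((a+b) choose a)) * dpow i (a+b) f"
proof (rule lin_ext[where F="\<lambda>f. dpow i a (dpow i b f)"])
  fix m c
  have k: "m - sg i b - sg i a = m - sg i (a+b)"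
    by (rule poly_mapping_eqI) (auto simp add: lookup_minus_single)
  have "of_nat ((lk m i - b) choose a) * (of_nat (lk m i choose b) * c)
      = of_nat ((a+b) choose a) * (of_nat (lk m i choose (a+b)) * (c::'b::comm_ring_1))"
    using arg_cong[OF choose_id[of "lk m i" b a], of "of_nat :: nat \<Rightarrow> 'b"]
    by (simp only: of_nat_mult mult.assoc[symmetric])
  then show "dpow i a (dpow i b (sg m c)) = const (of_nat ((a+b) choose a)) * dpow i (a+b) (sg m c)"
    by (simp add: dpow_single k const_mult_single lookup_minus_single)
qed (simp_all add: dpow_add distrib_left)

lemma dpow_var: "dpow i (Suc k) (var j * f) = var j * dpow i (Suc k) f + (if i = j then dpow i k f else 0)"
proof (rule lin_ext[where F="\<lambda>f. dpow i (Suc k) (var j * f)"])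
  fix m and c :: "'b::comm_ring_1"
  have vm: "var j * sg m c = sg (sg j 1 + m) c" for m and c :: 'b
    by (simp add: var_def Poly_Mapping.mult_single)
  show "dpow i (Suc k) (var j * sg m c) = var j * dpow i (Suc k) (sg m c) + (if i = j then dpow i k (sg m c) else 0)"
  proof (cases "i = j")
    case False
    have "sg j 1 + m - sg i (Suc k) = sg j 1 + (m - sg i (Suc k))"
      by (rule poly_mapping_eqI) (use False in \<open>auto simp add: lookup_minus_single lookup_plus_single\<close>)
    then show ?thesis using False by (simp add: vm dpow_single lookup_plus_single)
  next
    case True
    have k1: "sg j 1 + m - sg j (Suc k) = m - sg j k"
      by (rule poly_mapping_eqI) (use True in \<open>simp add: lookup_minus_single lookup_plus_single\<close>)
    have e: "sg (m - sg i k) (of_nat (lk m i choose Suc k) * c) = sg (sg j 1 + (m - sg i (Suc k))) (of_nat (lk m i choose Suc k) * c)"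
    proof (cases "Suc k \<le> lk m i")
      case True
      have "m - sg i k = sg j 1 + (m - sg i (Suc k))"
        by (rule poly_mapping_eqI) (use True \<open>i = j\<close> in \<open>auto simp add: lookup_minus_single lookup_plus_single Suc_diff_Suc\<close>)
      then show ?thesis by simp
    next
      case False
      then show ?thesis by (simp add: binomial_eq_0)
    qed
    have "dpow i (Suc k) (var j * sg m c) = sg (m - sg i k) (of_nat (Suc (lk m i) choose Suc k) * c)"
      using True by (simp add: vm dpow_single lookup_plus_single k1 plus_1_eq_Suc del: One_nat_def)
    also have "\<dots> = sg (m - sg i k) (of_nat (lk m i choose k) * c) + sg (m - sg i k) (of_nat (lk m i choose Suc k) * c)"
      by (simp add: distrib_right Poly_Mapping.single_add)
    also have "\<dots> = var j * dpow i (Suc k) (sg m c) + dpow i k (sg m c)"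
      by (simp add: e vm dpow_single)
    finally show ?thesis using True by simp
  qed
qed (simp_all add: dpow_add distrib_left)

definition tdeg :: "('n::finite \<Rightarrow>\<^sub>0 nat) \<Rightarrow> nat" where
  "tdeg m = (\<Sum>j\<in>UNIV. lk m j)"

lemma tdeg_add: "tdeg (a + b) = tdeg a + tdeg b"
  by (simp add: tdeg_def Poly_Mapping.lookup_add sum.distrib)

lemma tdeg_single: "tdeg (sg j k) = k"
  by (simp add: tdeg_def Poly_Mapping.lookup_single when_def)

lemma tdeg_zero_iff: "tdeg m = 0 \<longleftrightarrow> m = 0"
proof
  assume "tdeg m = 0"
  then have "\<forall>j. lk m j = 0" by (simp add: tdeg_def)
  then show "m = 0" by (intro poly_mapping_eqI) simp
qed (simp add: tdeg_def)

lemma mon_induct: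
  fixes m :: "'n::finite \<Rightarrow>\<^sub>0 nat"
  assumes "P 0" "\<And>j m. P m \<Longrightarrow> P (sg j 1 + m)"
  shows "P m"
proof (induction "tdeg m" arbitrary: m rule: less_induct)
  case less
  show ?case
  proof (cases "m = 0")
    case True then show ?thesis using assms by simp
  next
    case False
    then obtain j where j: "lk m j \<noteq> 0"
      by (metis poly_mapping_eqI lookup_zero)
    have e: "m = sg j 1 + (m - sg j 1)"
      by (rule poly_mapping_eqI) (use j in \<open>auto simp: lookup_plus_single lookup_minus_single\<close>)
    have "tdeg m = 1 + tdeg (m - sg j 1)"
      by (subst e) (simp add: tdeg_add tdeg_single)
    then have "P (m - sg j 1)" using less by simp
    then have "P (sg j 1 + (m - sg j 1))" by (rule assms(2))
    then show ?thesis using e by simp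
  qed
qed

lemma lookup_map_mult: "lk (Poly_Mapping.map ((*) (n::nat)) m) j = n * lk m j"
  by (auto simp add: Poly_Mapping.map.rep_eq when_def)

lemma single_power: "(sg m c :: ('n,'a::comm_ring_1) mpoly) ^ n = sg (Poly_Mapping.map ((*) n) m) (c ^ n)"
proof (induction n)
  case 0
  have e: "Poly_Mapping.map ((*) 0) m = 0" by (rule poly_mapping_eqI) (simp add: lookup_map_mult)
  show ?case by (simp only: power_0 e Poly_Mapping.single_one)
next
  case (Suc n)
  have "m + Poly_Mapping.map ((*) n) m = Poly_Mapping.map ((*) (Suc n)) m"
    by (rule poly_mapping_eqI) (simp add: lookup_map_mult Poly_Mapping.lookup_add)
  then show ?case using Suc by (simp only: power_Suc Poly_Mapping.mult_single)
qed

lemma CHAR_mpoly: "CHAR(('n,'a::comm_ring_1) mpoly) = CHAR('a)"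
proof (rule CHAR_eqI)
  show "of_nat CHAR('a) = (0::('n,'a) mpoly)"
    by (simp flip: Poly_Mapping.single_of_nat)
next
  fix x assume "of_nat x = (0::('n,'a) mpoly)"
  then have "lk (of_nat x :: ('n,'a) mpoly) 0 = 0"
    by simp
  then show "CHAR('a) dvd x" by (simp add: of_nat_eq_0_iff_char_dvd Poly_Mapping.lookup_of_nat)
qed

definition islin :: "(('n, 'a::comm_ring_1) mpoly \<Rightarrow> ('n, 'a) mpoly) \<Rightarrow> bool" where
  "islin a \<longleftrightarrow> (\<forall>f g. a (f + g) = a f + a g) \<and> (\<forall>c f. a (const c * f) = const c * a f)"

lemma diffops_lin: "a \<in> diffops \<Longrightarrow> islin a"
proof (induction rule: diffops.induct)
  case (mul f) then show ?case by (simp add: islin_def mulop_def distrib_left mult.left_commute)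
next
  case (der i k) then show ?case by (simp add: islin_def dpow_add dpow_smul)
next
  case (add a b) then show ?case by (simp add: islin_def distrib_left add_ac)
next
  case (comp a b) then show ?case by (simp add: islin_def)
qed

lemma central:
  fixes c :: "('n::finite, 'a::comm_ring_1) mpoly \<Rightarrow> ('n, 'a) mpoly"
  assumes "islin c" "\<And>j q. c (var j * q) = var j * c q"
  shows "c q = q * c 1"
proof -
  have X: "c (sg m 1) = sg m 1 * c 1" for m
  proof (induction m rule: mon_induct)
    case 1 then show ?case by simp
  next
    case (2 j m)
    have "sg (sg j 1 + m) (1::'a) = var j * sg m 1"
      by (simp add: var_def Poly_Mapping.mult_single)
    then show ?case using 2 assms(2) by (simp add: mult.assoc)
  qed
  show ?thesis
  proof (rule lin_ext[where F = c])
    fix m :: "'n \<Rightarrow>\<^sub>0 nat" and s :: 'a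
    have "sg m s = const s * sg m (1::'a)" by (simp add: const_mult_single)
    then show "c (sg m s) = sg m s * c 1"
      using assms(1) X by (simp add: islin_def mult.assoc)
  qed (use assms(1) in \<open>auto simp: islin_def distrib_right\<close>)
qed

lemma const_mult_const: "const a * const b = const (a * b)"
  by (simp add: const_def Poly_Mapping.mult_single)

lemma dpow_funpow:
  "(dpow i k ^^ n) f = const (of_nat (\<Prod>l<n. (k + l*k) choose k)) * dpow i (n*k) f"
proof (induction n)
  case 0 then show ?case by (simp add: dpow_0 const_def)
next
  case (Suc n)
  have "(dpow i k ^^ Suc n) f = dpow i k ((dpow i k ^^ n) f)" by simp
  also have "\<dots> = const (of_nat (\<Prod>l<n. (k + l*k) choose k)) * dpow i k (dpow i (n*k) f)"
    by (simp add: Suc dpow_smul)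
  also have "\<dots> = const (of_nat (\<Prod>l<n. (k + l*k) choose k)) * (const (of_nat ((k + n*k) choose k)) * dpow i (k + n*k) f)"
    by (simp only: dpow_comp)
  also have "\<dots> = const (of_nat (\<Prod>l<Suc n. (k + l*k) choose k)) * dpow i (Suc n*k) f"
    by (simp only: mult.assoc[symmetric] const_mult_const prod.lessThan_Suc of_nat_mult mult_Suc)
  finally show ?case .
qed

lemma p_dvd_choose: assumes "k > 0" "p > 0" shows "p dvd ((p*k) choose k)"
proof -
  have h: "Suc (p*k - 1) * ((p*k - 1) choose (k - 1)) = (Suc (p*k - 1) choose Suc (k - 1)) * Suc (k - 1)"
    by (rule Suc_times_binomial_eq)
  have e1: "Suc (p*k - 1) = p*k" and e2: "Suc (k-1) = k" using assms by auto
  have "p * k * ((p*k - 1) choose (k - 1)) = ((p*k) choose k) * k"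
    using h unfolding e1 e2 .
  then have "(p * ((p*k - 1) choose (k - 1))) * k = ((p*k) choose k) * k" by (simp add: ac_simps)
  then have "p * ((p*k - 1) choose (k - 1)) = (p*k) choose k" using assms by simp
  then show ?thesis by (metis dvd_triv_left)
qed

lemma dpow_nilpotent:
  assumes "k > 0" "CHAR('a::comm_ring_1) > 0"
  shows "(dpow i k ^^ CHAR('a)) = (mulop 0 :: ('n, 'a) mpoly \<Rightarrow> _)"
proof
  fix f :: "('n,'a) mpoly"
  let ?p = "CHAR('a)"
  have "((k + (?p - 1)*k) choose k) dvd (\<Prod>l<?p. (k + l*k) choose k)"
    by (rule dvd_prodI) (use assms in auto)
  moreover have "k + (?p - 1)*k = ?p * k" using assms
    by (cases ?p) (auto simp: algebra_simps)
  ultimately have "?p dvd (\<Prod>l<?p. (k + l*k) choose k)"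
    using p_dvd_choose[of k ?p] assms dvd_trans by metis
  then have "of_nat (\<Prod>l<?p. (k + l*k) choose k) = (0::'a)"
    by (simp only: of_nat_eq_0_iff_char_dvd)
  then show "(dpow i k ^^ ?p) f = mulop 0 f"
    by (simp add: dpow_funpow mulop_def const_def)
qed

lemma gp_sum:
  fixes g :: "('n::finite,'a::field) mpoly"
  assumes pr: "prime CHAR('a)"
  shows "g^CHAR('a) = (\<Sum>m\<in>ks g. sg (Poly_Mapping.map ((*) CHAR('a)) m) (lk g m ^ CHAR('a)))"
proof -
  have prm: "prime CHAR(('n,'a) mpoly)" using pr by (simp only: CHAR_mpoly)
  have "g^CHAR('a) = (\<Sum>m\<in>ks g. sg m (lk g m))^CHAR('a)" by (subst expand) (rule refl)
  also have "\<dots> = (\<Sum>m\<in>ks g. (sg m (lk g m))^CHAR('a))"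
    by (rule freshmans_dream_sum[OF prm]) (simp only: CHAR_mpoly)
  also have "\<dots> = (\<Sum>m\<in>ks g. sg (Poly_Mapping.map ((*) CHAR('a)) m) (lk g m ^ CHAR('a)))"
    by (simp only: single_power)
  finally show ?thesis .
qed

lemma gp_lookup:
  fixes g :: "('n::finite,'a::field) mpoly"
  assumes pr: "prime CHAR('a)" and ms: "ms \<in> ks g"
  shows "lk (g^CHAR('a)) (Poly_Mapping.map ((*) CHAR('a)) ms) = lk g ms ^ CHAR('a)"
proof -
  let ?p = "CHAR('a)"
  define M where "M = Poly_Mapping.map ((*) ?p) ms"
  have p0: "?p > 0" using pr prime_gt_0_nat by blast
  have inj: "Poly_Mapping.map ((*) ?p) m = M \<longleftrightarrow> m = ms" for m
  proof
    assume "Poly_Mapping.map ((*) ?p) m = M"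
    then have "\<forall>j. ?p * lk m j = ?p * lk ms j" unfolding M_def
      by (metis lookup_map_mult)
    then show "m = ms" using p0 by (intro poly_mapping_eqI) simp
  qed (simp add: M_def)
  have "lk (g^?p) M = (\<Sum>m\<in>ks g. lk (sg (Poly_Mapping.map ((*) ?p) m) (lk g m ^ ?p)) M)"
    by (simp only: gp_sum[OF pr] Poly_Mapping.lookup_sum)
  also have "\<dots> = (\<Sum>m\<in>ks g. if m = ms then lk g m ^ ?p else 0)"
  proof (rule sum.cong[OF refl])
    fix m assume "m \<in> ks g"
    show "lk (sg (Poly_Mapping.map ((*) ?p) m) (lk g m ^ ?p)) M = (if m = ms then lk g m ^ ?p else 0)"
      by (simp only: Poly_Mapping.lookup_single when_def inj)
  qed
  also have "\<dots> = lk g ms ^ ?p" using ms by simp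
  finally show ?thesis unfolding M_def .
qed

lemma dpow_keys:
  fixes h :: "('n::finite,'b::comm_ring_1) mpoly"
  assumes "m' \<in> ks (dpow i k h)"
  shows "\<exists>m\<in>ks h. tdeg m' + k = tdeg m"
proof -
  have "ks (dpow i k h) \<subseteq> (\<Union>m\<in>ks h. ks (sg (m - sg i k) (of_nat (lk m i choose k) * lk h m)))"
    unfolding dpow_def by (rule Poly_Mapping.keys_sum)
  with assms obtain m where m: "m \<in> ks h"
    and mm: "m' \<in> ks (sg (m - sg i k) (of_nat (lk m i choose k) * lk h m))"
    by blast
  have nz0: "of_nat (lk m i choose k) * lk h m \<noteq> (0::'b)"
    using mm by (cases "of_nat (lk m i choose k) * lk h m = (0::'b)") simp_all
  then have m': "m' = m - sg i k" using mm by simp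
  have "lk m i choose k \<noteq> 0" using nz0 by (cases "lk m i choose k = 0") simp_all
  then have ki: "k \<le> lk m i" using binomial_eq_0[of "lk m i" k] by linarith
  have "m = m' + sg i k"
    unfolding m' by (intro poly_mapping_eqI) (use ki in \<open>auto simp add: lookup_minus_single Poly_Mapping.lookup_add Poly_Mapping.lookup_single when_def\<close>)
  then have td: "tdeg m = tdeg m' + k" by (simp add: tdeg_add tdeg_single)
  show ?thesis by (rule bexI[of _ m]) (use td m in simp_all)
qed

lemma tdeg_map: "tdeg (Poly_Mapping.map ((*) p) m) = p * tdeg m"
  by (simp add: tdeg_def lookup_map_mult sum_distrib_left)

lemma claim_lem:
  fixes g :: "('n::finite,'a::field) mpoly"
  assumes Dadd: "\<And>a b. D (a+b) = D a + D b"
    and Dlow: "\<And>h m'. m' \<in> ks (D h) \<Longrightarrow> \<exists>m\<in>ks h. tdeg m' < tdeg m"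
    and gpow: "\<And>j. \<forall>m\<in>ks (g^j). tdeg m \<le> j*d"
    and dmax: "\<And>a. a \<in> ks g \<Longrightarrow> tdeg a \<le> d"
  shows "\<exists>r. ((\<lambda>q. D q + g*q)^^j) 1 = g^j + r \<and> (\<forall>m\<in>ks r. tdeg m < j*d)"
proof (induction j)
  case 0 then show ?case by (intro exI[of _ 0]) simp
next
  case (Suc j)
  then obtain r where r1: "((\<lambda>q. D q + g*q)^^j) 1 = g^j + r" and r2: "\<forall>m\<in>ks r. tdeg m < j*d" by blast
  define r' where "r' = D (g^j) + D r + g * r"
  have "((\<lambda>q. D q + g*q)^^Suc j) 1 = D (g^j + r) + g * (g^j + r)" using r1 by simp
  also have "\<dots> = D (g^j) + D r + (g * g^j + g * r)" by (simp only: Dadd distrib_left)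
  also have "\<dots> = g^Suc j + r'" unfolding r'_def power_Suc by (simp only: add_ac)
  finally have e: "((\<lambda>q. D q + g*q)^^Suc j) 1 = g^Suc j + r'" .
  have jd: "j * d \<le> Suc j * d" by simp
  have "tdeg m < Suc j * d" if m: "m \<in> ks r'" for m
  proof -
    have "m \<in> ks (D (g^j)) \<or> m \<in> ks (D r) \<or> m \<in> ks (g * r)"
      using m Poly_Mapping.keys_add[of "D (g^j) + D r" "g * r"] Poly_Mapping.keys_add[of "D (g^j)" "D r"]
      unfolding r'_def by blast
    then show ?thesis
    proof (elim disjE)
      assume "m \<in> ks (D (g^j))"
      then obtain a where a: "a \<in> ks (g^j)" "tdeg m < tdeg a" using Dlow by blast
      have "tdeg a \<le> j * d" using gpow a(1) by blast
      then show ?thesis using a(2) jd by linarith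
    next
      assume "m \<in> ks (D r)"
      then obtain a where a: "a \<in> ks r" "tdeg m < tdeg a" using Dlow by blast
      have "tdeg a < j * d" using r2 a(1) by blast
      then show ?thesis using a(2) jd by linarith
    next
      assume "m \<in> ks (g * r)"
      then obtain a b where ab: "m = a + b" "a \<in> ks g" "b \<in> ks r"
        using Poly_Mapping.keys_mult[of g r] by auto
      have "tdeg a \<le> d" "tdeg b < j * d" using ab r2 dmax by auto
      then show ?thesis using ab by (simp add: tdeg_add)
    qed
  qed
  then show ?case using e by blast
qed

lemma deg_arg:
  fixes g :: "('n::finite,'a::field) mpoly"
  assumes Dadd: "\<And>a b. D (a+b) = D a + D b"
    and Dlow: "\<And>h m'. m' \<in> ks (D h) \<Longrightarrow> \<exists>m\<in>ks h. tdeg m' < tdeg m"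
    and pr: "prime CHAR('a)"
    and z: "((\<lambda>q. D q + g*q) ^^ CHAR('a)) 1 = 0"
  shows "g = 0"
proof (rule ccontr)
  assume g0: "g \<noteq> 0"
  let ?p = "CHAR('a)"
  let ?F = "\<lambda>q. D q + g*q"
  define d where "d = Max (tdeg ` ks g)"
  have dmax: "tdeg a \<le> d" if "a \<in> ks g" for a
    unfolding d_def using that by (intro Max_ge) auto
  have gpow: "\<forall>m\<in>ks (g^j). tdeg m \<le> j*d" for j
  proof (induction j)
    case 0 then show ?case by (simp add: tdeg_def)
  next
    case (Suc j)
    show ?case
    proof
      fix m assume "m \<in> ks (g^Suc j)"
      then obtain a b where ab: "m = a + b" "a \<in> ks g" "b \<in> ks (g^j)"
        using Poly_Mapping.keys_mult[of g "g^j"] by auto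
      have "tdeg a \<le> d" "tdeg b \<le> j * d" using ab Suc dmax by auto
      then show "tdeg m \<le> Suc j * d" using ab by (simp add: tdeg_add)
    qed
  qed
  have claim: "\<exists>r. (?F^^j) 1 = g^j + r \<and> (\<forall>m\<in>ks r. tdeg m < j*d)" for j
    by (rule claim_lem) (use Dadd Dlow gpow dmax in auto)
  obtain r where r1: "(?F^^?p) 1 = g^?p + r" and r2: "\<forall>m\<in>ks r. tdeg m < ?p*d"
    using claim[of ?p] by blast
  have r: "0 = g^?p + r" using r1 z by (metis (no_types))
  have ne: "ks g \<noteq> {}" using g0 by simp
  have "d \<in> tdeg ` ks g" unfolding d_def using ne by (intro Max_in) auto
  then obtain ms where ms: "ms \<in> ks g" "tdeg ms = d" by blast
  define M where "M = Poly_Mapping.map ((*) ?p) ms"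
  have tM: "tdeg M = ?p * d" unfolding M_def by (simp add: tdeg_map ms)
  have "M \<notin> ks r" using r2 tM by (metis less_irrefl)
  then have rM: "lk r M = 0" by (simp add: in_keys_iff)
  have "lk (g^?p) M = lk g ms ^ ?p" unfolding M_def by (rule gp_lookup[OF pr ms(1)])
  moreover have "lk g ms \<noteq> 0" using ms(1) by (simp add: in_keys_iff)
  ultimately have "lk (g^?p) M \<noteq> 0" by (metis power_not_zero)
  moreover have "lk (g^?p + r) M = lk (g^?p) M + lk r M" by (rule Poly_Mapping.lookup_add)
  ultimately show False using r rM by (metis add.right_neutral Poly_Mapping.lookup_zero)
qed

definition good :: "((('n, 'a::comm_ring_1) mpoly \<Rightarrow> ('n, 'a) mpoly) \<Rightarrow> (('n, 'a) mpoly \<Rightarrow> ('n, 'a) mpoly)) \<Rightarrow> bool" where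
  "good \<rho> \<longleftrightarrow> (\<forall>a\<in>diffops. \<rho> a \<in> diffops) \<and>
     (\<forall>a\<in>diffops. \<forall>b\<in>diffops. \<rho> (\<lambda>q. a q + b q) = (\<lambda>q. \<rho> a q + \<rho> b q)) \<and>
     (\<forall>a\<in>diffops. \<forall>b\<in>diffops. \<rho> (a \<circ> b) = \<rho> a \<circ> \<rho> b) \<and>
     \<rho> id = id \<and>
     (\<forall>c. \<forall>a\<in>diffops. \<rho> (mulop (const c) \<circ> a) = mulop (const c) \<circ> \<rho> a) \<and>
     (\<forall>j. \<rho> (mulop (var j)) = mulop (var j))"

lemma good_p1: "good \<rho> \<Longrightarrow> \<forall>a\<in>diffops. \<rho> a \<in> diffops"
  unfolding good_def by (elim conjE, assumption)

lemma good_p2: "good \<rho> \<Longrightarrow> \<forall>a\<in>diffops. \<forall>b\<in>diffops. \<rho> (\<lambda>q. a q + b q) = (\<lambda>q. \<rho> a q + \<rho> b q)"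
  unfolding good_def by (elim conjE, assumption)

lemma good_p3: "good \<rho> \<Longrightarrow> \<forall>a\<in>diffops. \<forall>b\<in>diffops. \<rho> (a \<circ> b) = \<rho> a \<circ> \<rho> b"
  unfolding good_def by (elim conjE, assumption)

lemma good_p4: "good \<rho> \<Longrightarrow> \<rho> id = id"
  unfolding good_def by (elim conjE, assumption)

lemma good_p5: "good \<rho> \<Longrightarrow> \<forall>c. \<forall>a\<in>diffops. \<rho> (mulop (const c) \<circ> a) = mulop (const c) \<circ> \<rho> a"
  unfolding good_def by (elim conjE, assumption)

lemma good_p6: "good \<rho> \<Longrightarrow> \<forall>j. \<rho> (mulop (var j)) = mulop (var j)"
  unfolding good_def by (elim conjE, assumption)

lemmas good_parts = good_p1 good_p2 good_p3 good_p4 good_p5 good_p6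

lemma id_mulop: "id = mulop 1"
  by (simp add: mulop_def fun_eq_iff)

lemma id_diffops: "id \<in> diffops"
  by (simp add: id_mulop diffops.mul)

lemma mulop_add: "mulop (a + b) = (\<lambda>q. mulop a q + mulop b q)"
  by (simp add: mulop_def fun_eq_iff distrib_right)

lemma mulop_mult: "mulop (a * b) = mulop a \<circ> mulop b"
  by (simp add: mulop_def fun_eq_iff mult.assoc)

lemma good_mulop:
  fixes \<rho> :: "((('n::finite, 'a::comm_ring_1) mpoly \<Rightarrow> ('n, 'a) mpoly) \<Rightarrow> (('n, 'a) mpoly \<Rightarrow> ('n, 'a) mpoly))"
  assumes g: "good \<rho>"
  shows "\<rho> (mulop f) = mulop f"
proof -
  have cst: "\<rho> (mulop (const c)) = mulop (const c)" for c
  proof -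
    have "mulop (const c) = mulop (const c) \<circ> id" by simp
    then have "\<rho> (mulop (const c)) = mulop (const c) \<circ> \<rho> id"
      using g id_diffops unfolding good_def by metis
    then show ?thesis using g unfolding good_def by simp
  qed
  have X: "\<rho> (mulop (sg m 1)) = mulop (sg m (1::'a))" for m :: "'n \<Rightarrow>\<^sub>0 nat"
  proof (induction m rule: mon_induct)
    case 1
    have e: "mulop (sg 0 (1::'a)) = (id :: ('n,'a) mpoly \<Rightarrow> _)" by (simp add: id_mulop)
    show ?case using g unfolding good_def e by blast
  next
    case (2 j m)
    have "sg (sg j 1 + m) (1::'a) = var j * sg m 1"
      by (simp add: var_def Poly_Mapping.mult_single)
    then have e: "mulop (sg (sg j 1 + m) (1::'a)) = mulop (var j) \<circ> mulop (sg m 1)"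
      by (simp add: mulop_mult)
    have r: "\<rho> (mulop (var j) \<circ> mulop (sg m 1)) = \<rho> (mulop (var j)) \<circ> \<rho> (mulop (sg m 1))"
      using g diffops.mul unfolding good_def by blast
    have gv: "\<rho> (mulop (var j)) = mulop (var j)" using g unfolding good_def by blast
    show ?case by (simp only: e r gv 2)
  qed
  have mon: "\<rho> (mulop (sg m c)) = mulop (sg m c)" for m c
  proof -
    have e: "mulop (sg m c) = mulop (const c) \<circ> mulop (sg m 1)"
      by (simp add: const_mult_single flip: mulop_mult)
    have r: "\<rho> (mulop (const c) \<circ> mulop (sg m 1)) = mulop (const c) \<circ> \<rho> (mulop (sg m 1))"
      using g diffops.mul unfolding good_def by blast
    show ?thesis by (simp only: e r X)
  qed
  have sum: "\<rho> (mulop (\<Sum>m\<in>S. sg m (lk f m))) = mulop (\<Sum>m\<in>S. sg m (lk f m))" if "finite S" for S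
    using that
  proof (induction S rule: finite_induct)
    case empty
    have "const 0 = (0::('n,'a) mpoly)" by (simp add: const_def)
    then show ?case using cst[of 0] by simp
  next
    case (insert x F)
    then show ?case using g mon unfolding good_def by (simp add: mulop_add diffops.mul)
  qed
  show ?thesis by (subst (1 2) expand) (rule sum, simp)
qed

lemma good_funpow:
  assumes g: "good \<rho>" and D: "D \<in> diffops"
  shows "D ^^ n \<in> diffops \<and> \<rho> (D ^^ n) = \<rho> D ^^ n"
proof (induction n)
  case 0 then show ?case using g id_diffops unfolding good_def funpow.simps(1) by blast
next
  case (Suc n)
  have r: "\<rho> (D \<circ> D ^^ n) = \<rho> D \<circ> \<rho> (D ^^ n)" using g D Suc unfolding good_def by blast
  show ?case unfolding funpow.simps(2)
    by (rule conjI, rule diffops.comp[OF D], use Suc in blast, simp only: r Suc)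
qed

lemma good_dpow:
  fixes \<rho> :: "((('n::finite, 'a::field) mpoly \<Rightarrow> ('n, 'a) mpoly) \<Rightarrow> (('n, 'a) mpoly \<Rightarrow> ('n, 'a) mpoly))"
  assumes g: "good \<rho>" and ch: "CHAR('a) > 0"
  shows "\<rho> (dpow i k) = dpow i k"
proof (induction k)
  case 0
  have d0: "dpow i 0 = (id :: ('n,'a) mpoly \<Rightarrow> _)" by (simp add: fun_eq_iff dpow_0)
  show ?case using g unfolding good_def d0 by blast
next
  case (Suc k)
  let ?D = "dpow i (Suc k) :: ('n,'a) mpoly \<Rightarrow> _"
  define A where "A = \<rho> ?D"
  have gd: "\<forall>a\<in>diffops. \<rho> a \<in> diffops"
     "\<forall>a\<in>diffops. \<forall>b\<in>diffops. \<rho> (\<lambda>q. a q + b q) = (\<lambda>q. \<rho> a q + \<rho> b q)"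
     "\<forall>a\<in>diffops. \<forall>b\<in>diffops. \<rho> (a \<circ> b) = \<rho> a \<circ> \<rho> b"
     "\<forall>j. \<rho> (mulop (var j)) = mulop (var j)"
    by (rule good_p1[OF g], rule good_p2[OF g], rule good_p3[OF g], rule good_p6[OF g])
  have Ad: "A \<in> diffops" unfolding A_def by (rule gd(1)[rule_format, OF diffops.der])
  have linA: "islin A" by (rule diffops_lin[OF Ad])
  have comm: "A (var j * q) = var j * A q + (if i = j then dpow i k q else 0)" for j q
  proof -
    define E where "E = (if i = j then dpow i k else mulop 0 :: ('n,'a) mpoly \<Rightarrow> _)"
    have Ed: "E \<in> diffops" unfolding E_def by (simp add: diffops.der diffops.mul)
    have rE: "\<rho> E = E"
    proof (cases "i = j")
      case True then show ?thesis unfolding E_def using Suc.IH by simp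
    next
      case False then show ?thesis unfolding E_def using good_mulop[OF g] by simp
    qed
    have Eq: "E q = (if i = j then dpow i k q else 0)" for q unfolding E_def mulop_def by simp
    have vd: "mulop (var j) \<in> diffops" by (rule diffops.mul)
    have Dd: "?D \<in> diffops" by (rule diffops.der)
    have vDd: "mulop (var j) \<circ> ?D \<in> diffops" by (rule diffops.comp[OF vd Dd])
    have e1: "?D \<circ> mulop (var j) = (\<lambda>q. (mulop (var j) \<circ> ?D) q + E q)"
      by (simp add: fun_eq_iff mulop_def dpow_var Eq)
    have h1: "\<rho> (?D \<circ> mulop (var j)) = A \<circ> mulop (var j)"
      unfolding A_def by (simp only: gd(3)[rule_format, OF Dd vd] gd(4)[rule_format])
    have h2: "\<rho> (\<lambda>q. (mulop (var j) \<circ> ?D) q + E q) = (\<lambda>q. \<rho> (mulop (var j) \<circ> ?D) q + \<rho> E q)"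
      by (rule gd(2)[rule_format, OF vDd Ed])
    have h3: "\<rho> (mulop (var j) \<circ> ?D) = mulop (var j) \<circ> A"
      unfolding A_def by (simp only: gd(3)[rule_format, OF vd Dd] gd(4)[rule_format])
    have "A \<circ> mulop (var j) = \<rho> (\<lambda>q. (mulop (var j) \<circ> ?D) q + E q)"
      using h1 unfolding e1 by (rule sym)
    also have "\<dots> = (\<lambda>q. \<rho> (mulop (var j) \<circ> ?D) q + \<rho> E q)" by (rule h2)
    also have "\<dots> = (\<lambda>q. (mulop (var j) \<circ> A) q + E q)" by (simp only: h3 rE)
    finally have AE: "A \<circ> mulop (var j) = (\<lambda>q. (mulop (var j) \<circ> A) q + E q)" .
    have "(A \<circ> mulop (var j)) q = (mulop (var j) \<circ> A) q + E q" using fun_cong[OF AE, of q] by (simp only:)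
    then have "A (var j * q) = var j * A q + E q" by (simp only: comp_apply mulop_def)
    then show ?thesis by (simp only: Eq)
  qed
  define c where "c = (\<lambda>q. A q - ?D q)"
  have linc: "islin c" using linA unfolding islin_def c_def
    by (simp add: dpow_add dpow_smul right_diff_distrib)
  have cv: "c (var j * q) = var j * c q" for j q
    unfolding c_def using comm[of j q] dpow_var[of i k j q] by (simp add: right_diff_distrib)
  define g0 where "g0 = c 1"
  have Aeq: "A = (\<lambda>q. ?D q + g0 * q)"
  proof
    fix q
    have "c q = q * c 1" by (rule central[OF linc cv])
    then show "A q = ?D q + g0 * q" unfolding c_def g0_def by (simp add: algebra_simps)
  qed
  have "\<rho> (?D ^^ CHAR('a)) = A ^^ CHAR('a)"
    using good_funpow[OF g diffops.der] unfolding A_def by blast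
  moreover have "?D ^^ CHAR('a) = mulop 0" by (rule dpow_nilpotent) (use ch in auto)
  ultimately have "A ^^ CHAR('a) = mulop 0" using good_mulop[OF g] by metis
  then have A0: "A ^^ CHAR('a) = mulop 0" .
  have "(A ^^ CHAR('a)) 1 = mulop 0 1" using fun_cong[OF A0, of 1] by (simp only:)
  then have z: "((\<lambda>q. ?D q + g0 * q) ^^ CHAR('a)) 1 = 0" unfolding Aeq by (simp add: mulop_def)
  have pr: "prime CHAR('a)" using ch prime_CHAR_semidom by blast
  have "g0 = 0"
  proof (rule deg_arg[OF dpow_add _ pr z])
    fix h :: "('n,'a) mpoly" and m' assume "m' \<in> ks (?D h)"
    then obtain m where "m \<in> ks h" "tdeg m' + Suc k = tdeg m" using dpow_keys by blast
    then show "\<exists>m\<in>ks h. tdeg m' < tdeg m" by force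
  qed
  then show ?case using Aeq unfolding A_def by (simp add: fun_eq_iff)
qed

lemma good_all:
  fixes \<rho> :: "((('n::finite, 'a::field) mpoly \<Rightarrow> ('n, 'a) mpoly) \<Rightarrow> (('n, 'a) mpoly \<Rightarrow> ('n, 'a) mpoly))"
  assumes g: "good \<rho>" and ch: "CHAR('a) > 0" and a: "a \<in> diffops"
  shows "\<rho> a = a"
  using a
proof (induction rule: diffops.induct)
  case (mul f) then show ?case using good_mulop[OF g] by simp
next
  case (der i k) then show ?case using good_dpow[OF g ch] by simp
next
  case (add a b)
  have "\<rho> (\<lambda>q. a q + b q) = (\<lambda>q. \<rho> a q + \<rho> b q)" using good_p2[OF g] add.hyps by blast
  then show ?case by (simp only: add.IH)
next
  case (comp a b)
  have "\<rho> (a \<circ> b) = \<rho> a \<circ> \<rho> b" using good_p3[OF g] comp.hyps by blast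
  then show ?case by (simp only: comp.IH)
qed

theorem theorem1p1:
  fixes \<sigma> \<tau> :: "((('n::finite, 'a::field) mpoly \<Rightarrow> ('n, 'a) mpoly) \<Rightarrow> (('n, 'a) mpoly \<Rightarrow> ('n, 'a) mpoly))"
  assumes "CHAR('a) > 0"
    and "is_Kalg_aut \<sigma>" and "is_Kalg_aut \<tau>"
  shows "(\<forall>a\<in>diffops. \<sigma> a = \<tau> a) \<longleftrightarrow> (\<forall>i. \<sigma> (mulop (var i)) = \<tau> (mulop (var i)))"
proof
  assume "\<forall>a\<in>diffops. \<sigma> a = \<tau> a"
  then show "\<forall>i. \<sigma> (mulop (var i)) = \<tau> (mulop (var i))" by (simp add: diffops.mul)
next
  assume hv: "\<forall>i. \<sigma> (mulop (var i)) = \<tau> (mulop (var i))"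
  have s1: "bij_betw \<sigma> diffops diffops"
    using assms(2) unfolding is_Kalg_aut_def by (elim conjE)
  have s2: "\<forall>a\<in>diffops. \<forall>b\<in>diffops. \<sigma> (\<lambda>q. a q + b q) = (\<lambda>q. \<sigma> a q + \<sigma> b q)"
    using assms(2) unfolding is_Kalg_aut_def by (elim conjE)
  have s3: "\<forall>a\<in>diffops. \<forall>b\<in>diffops. \<sigma> (a \<circ> b) = \<sigma> a \<circ> \<sigma> b"
    using assms(2) unfolding is_Kalg_aut_def by (elim conjE)
  have s4: "\<sigma> id = id"
    using assms(2) unfolding is_Kalg_aut_def by (elim conjE)
  have s5: "\<forall>c. \<forall>a\<in>diffops. \<sigma> (mulop (const c) \<circ> a) = mulop (const c) \<circ> \<sigma> a"
    using assms(2) unfolding is_Kalg_aut_def by (elim conjE)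
  have t1: "bij_betw \<tau> diffops diffops"
    using assms(3) unfolding is_Kalg_aut_def by (elim conjE)
  have t2: "\<forall>a\<in>diffops. \<forall>b\<in>diffops. \<tau> (\<lambda>q. a q + b q) = (\<lambda>q. \<tau> a q + \<tau> b q)"
    using assms(3) unfolding is_Kalg_aut_def by (elim conjE)
  have t3: "\<forall>a\<in>diffops. \<forall>b\<in>diffops. \<tau> (a \<circ> b) = \<tau> a \<circ> \<tau> b"
    using assms(3) unfolding is_Kalg_aut_def by (elim conjE)
  have t4: "\<tau> id = id"
    using assms(3) unfolding is_Kalg_aut_def by (elim conjE)
  have t5: "\<forall>c. \<forall>a\<in>diffops. \<tau> (mulop (const c) \<circ> a) = mulop (const c) \<circ> \<tau> a"
    using assms(3) unfolding is_Kalg_aut_def by (elim conjE)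
  define \<rho> where "\<rho> = (\<lambda>a. inv_into diffops \<tau> (\<sigma> a))"
  have sin: "\<sigma> a \<in> diffops" if "a \<in> diffops" for a
    using s1 that bij_betwE by blast
  have img: "\<tau> ` diffops = diffops" using t1 by (simp add: bij_betw_def)
  have inj: "inj_on \<tau> diffops" using t1 by (simp add: bij_betw_def)
  have rin: "\<rho> a \<in> diffops" if "a \<in> diffops" for a
    unfolding \<rho>_def using sin[OF that] img by (metis inv_into_into)
  have tr: "\<tau> (\<rho> a) = \<sigma> a" if "a \<in> diffops" for a
    unfolding \<rho>_def using sin[OF that] img by (metis f_inv_into_f)
  have eq: "x = y" if "x \<in> diffops" "y \<in> diffops" "\<tau> x = \<tau> y" for x y
    using inj that by (meson inj_onD)
  have "good \<rho>"
    unfolding good_def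
  proof (intro conjI ballI allI)
    fix a :: "('n,'a) mpoly \<Rightarrow> ('n,'a) mpoly" assume "a \<in> diffops" then show "\<rho> a \<in> diffops" by (rule rin)
  next
    fix a b :: "('n,'a) mpoly \<Rightarrow> ('n,'a) mpoly" assume ab: "a \<in> diffops" "b \<in> diffops"
    show "\<rho> (\<lambda>q. a q + b q) = (\<lambda>q. \<rho> a q + \<rho> b q)"
    proof -
      have l: "\<tau> (\<rho> (\<lambda>q. a q + b q)) = \<sigma> (\<lambda>q. a q + b q)" by (rule tr) (rule diffops.add[OF ab])
      have s2c: "\<sigma> (\<lambda>q. a q + b q) = (\<lambda>q. \<sigma> a q + \<sigma> b q)" using s2 ab by blast
      have t2c: "\<tau> (\<lambda>q. \<rho> a q + \<rho> b q) = (\<lambda>q. \<tau> (\<rho> a) q + \<tau> (\<rho> b) q)" using t2 rin ab by blast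
      show ?thesis
        by (rule eq) (rule rin, rule diffops.add[OF ab], rule diffops.add[OF rin rin], rule ab(1), rule ab(2), simp only: l s2c t2c tr[OF ab(1)] tr[OF ab(2)])
    qed
  next
    fix a b :: "('n,'a) mpoly \<Rightarrow> ('n,'a) mpoly" assume ab: "a \<in> diffops" "b \<in> diffops"
    show "\<rho> (a \<circ> b) = \<rho> a \<circ> \<rho> b"
    proof -
      have l: "\<tau> (\<rho> (a \<circ> b)) = \<sigma> (a \<circ> b)" by (rule tr) (rule diffops.comp[OF ab])
      have s3c: "\<sigma> (a \<circ> b) = \<sigma> a \<circ> \<sigma> b" using s3 ab by blast
      have t3c: "\<tau> (\<rho> a \<circ> \<rho> b) = \<tau> (\<rho> a) \<circ> \<tau> (\<rho> b)" using t3 rin ab by blast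
      show ?thesis
        by (rule eq) (rule rin, rule diffops.comp[OF ab], rule diffops.comp[OF rin rin], rule ab(1), rule ab(2), simp only: l s3c t3c tr[OF ab(1)] tr[OF ab(2)])
    qed
  next
    show "\<rho> id = id"
      by (rule eq) (rule rin[OF id_diffops], rule id_diffops, simp only: tr[OF id_diffops] s4 t4)
  next
    fix c and a :: "('n,'a) mpoly \<Rightarrow> ('n,'a) mpoly" assume a: "a \<in> diffops"
    show "\<rho> (mulop (const c) \<circ> a) = mulop (const c) \<circ> \<rho> a"
    proof -
      have l: "\<tau> (\<rho> (mulop (const c) \<circ> a)) = \<sigma> (mulop (const c) \<circ> a)"
        by (rule tr) (rule diffops.comp[OF diffops.mul a])
      have s5c: "\<sigma> (mulop (const c) \<circ> a) = mulop (const c) \<circ> \<sigma> a" using s5 a by blast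
      have t5c: "\<tau> (mulop (const c) \<circ> \<rho> a) = mulop (const c) \<circ> \<tau> (\<rho> a)" using t5 rin[OF a] by blast
      show ?thesis
        by (rule eq) (rule rin, rule diffops.comp[OF diffops.mul a], rule diffops.comp[OF diffops.mul rin[OF a]], simp only: l s5c t5c tr[OF a])
    qed
  next
    fix j
    show "\<rho> (mulop (var j)) = mulop (var j)"
      by (rule eq) (rule rin[OF diffops.mul], rule diffops.mul, simp only: tr[OF diffops.mul] hv[rule_format])
  qed
  show "\<forall>a\<in>diffops. \<sigma> a = \<tau> a"
  proof
    fix a :: "('n,'a) mpoly \<Rightarrow> ('n,'a) mpoly" assume a: "a \<in> diffops"
    have "\<sigma> a = \<tau> (\<rho> a)" using tr[OF a] by (rule sym)
    also have "\<rho> a = a" by (rule good_all[OF \<open>good \<rho>\<close> assms(1) a])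
    finally show "\<sigma> a = \<tau> a" .
  qed
qed

end
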